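(* Let $R$ be a suitable ring with a nice topology, and suppose that convergent limits of units are units, i.e. whenever a net of units of $R$ converges to an element $w\in R$, $w$ is a unit. Then $R$ is an $\aleph_0$-exchange ring.
   Context: A ring $R$ is suitable if whenever $x+y=1$ in $R$ there are orthogonal idempotents $e\in Rx$, $f\in Ry$ with $e+f=1$. A linear Hausdorff topology on $R$ is a ring topology with a basis $\mathfrak U$ of neighborhoods of $0$ consisting of left ideals, with $\bigcap_{U\in\mathfrak U}U=0$. A family $\{x_i\}_{i\in I}\subseteq R$ is summable to $r$ if for every $U\in\mathfrak U$ there is a finite $F'\subseteq I$ with $\sum_{i\in F}x_i-r\in U$ for all finite $F$ with $F'\subseteq F\subseteq I$ (write $\sum_{i\in I}x_i=r$; the family is then called summable). The topology is nice if it is linear, Hausdorff, and for every summable family $\{x_i\}_{i\in I}$ and every family $\{r_i\}_{i\in I}\subseteq R$ the family $\{r_ix_i\}_{i\in I}$ is summable. For a cardinal $\aleph$, $R$ is an $\aleph$-exchange ring if for every family $\{x_i\}_{i\in I}$ with $|I|\le\aleph$ summable to $1$ there exist pairwise orthogonal idempotents $e_i\in Rx_i$ forming a summable family with $\sum_{i\in I}e_i=1$. *)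

theory Defs
  imports "HOL-Library.Countable_Set"
begin

text \<open>Throughout, the ring R is the type 'a of class ring_1 (associative, with 1,
  not necessarily commutative). A linear topology is given by its basis 
  of neighbourhoods of 0, a set of subsets of R.\<close>

definition left_ideal :: "'a::ring_1 set \<Rightarrow> bool" where
  "left_ideal L \<longleftrightarrow> 0 \<in> L \<and> (\<forall>x\<in>L. \<forall>y\<in>L. x + y \<in> L) \<and> (\<forall>r. \<forall>x\<in>L. r * x \<in> L)"

definition is_unit :: "'a::ring_1 \<Rightarrow> bool" where
  "is_unit u \<longleftrightarrow> (\<exists>v. u * v = 1 \<and> v * u = 1)"

definition idempotent :: "'a::ring_1 \<Rightarrow> bool" where
  "idempotent e \<longleftrightarrow> e * e = e"

definition orthogonal :: "'a::ring_1 \<Rightarrow> 'a \<Rightarrow> bool" where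
  "orthogonal e f \<longleftrightarrow> e * f = 0 \<and> f * e = 0"

definition in_left_mult :: "'a::ring_1 \<Rightarrow> 'a \<Rightarrow> bool" where
  "in_left_mult e x \<longleftrightarrow> (\<exists>r. e = r * x)"

definition suitable :: "'a::ring_1 itself \<Rightarrow> bool" where
  "suitable _ \<longleftrightarrow> (\<forall>x y::'a. x + y = 1 \<longrightarrow>
     (\<exists>e f. idempotent e \<and> idempotent f \<and> orthogonal e f \<and> e + f = 1
            \<and> in_left_mult e x \<and> in_left_mult f y))"

text \<open>A set U of left ideals is a basis of neighbourhoods of 0 for a ring topology
  (the topology in which the neighbourhoods of x are the sets containing some x + U):
  it is a nonempty filter base of left ideals, and right multiplication by each
  element is continuous at 0 (the remaining ring-topology axioms are automatic for
  left ideals).\<close>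
definition linear_topology :: "'a::ring_1 set set \<Rightarrow> bool" where
  "linear_topology \<U> \<longleftrightarrow> \<U> \<noteq> {} \<and> (\<forall>U\<in>\<U>. left_ideal U)
     \<and> (\<forall>U\<in>\<U>. \<forall>V\<in>\<U>. \<exists>W\<in>\<U>. W \<subseteq> U \<inter> V)
     \<and> (\<forall>U\<in>\<U>. \<forall>r. \<exists>V\<in>\<U>. \<forall>v\<in>V. v * r \<in> U)"

definition linear_hausdorff :: "'a::ring_1 set set \<Rightarrow> bool" where
  "linear_hausdorff \<U> \<longleftrightarrow> linear_topology \<U> \<and> \<Inter>\<U> = {0}"

definition summable_to :: "'a::ring_1 set set \<Rightarrow> 'i set \<Rightarrow> ('i \<Rightarrow> 'a) \<Rightarrow> 'a \<Rightarrow> bool" where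
  "summable_to \<U> I x r \<longleftrightarrow> (\<forall>U\<in>\<U>. \<exists>F'. finite F' \<and> F' \<subseteq> I \<and>
      (\<forall>F. finite F \<and> F' \<subseteq> F \<and> F \<subseteq> I \<longrightarrow> sum x F - r \<in> U))"

definition summable_fam :: "'a::ring_1 set set \<Rightarrow> 'i set \<Rightarrow> ('i \<Rightarrow> 'a) \<Rightarrow> bool" where
  "summable_fam \<U> I x \<longleftrightarrow> (\<exists>r. summable_to \<U> I x r)"

text \<open>Niceness, with families indexed by subsets of the type 'a set set.\<close>
definition nice :: "'a::ring_1 set set \<Rightarrow> bool" where
  "nice \<U> \<longleftrightarrow> linear_hausdorff \<U> \<and>
     (\<forall>(I::'a set set set) x r. summable_fam \<U> I x \<longrightarrow> summable_fam \<U> I (\<lambda>i. r i * x i))"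

text \<open>Nets: indexed by a directed set D (with preorder le); directed sets are taken
  with elements of type 'a set.\<close>
definition directed :: "'d set \<Rightarrow> ('d \<Rightarrow> 'd \<Rightarrow> bool) \<Rightarrow> bool" where
  "directed D le \<longleftrightarrow> D \<noteq> {} \<and> (\<forall>d\<in>D. le d d)
     \<and> (\<forall>a\<in>D. \<forall>b\<in>D. \<forall>c\<in>D. le a b \<and> le b c \<longrightarrow> le a c)
     \<and> (\<forall>a\<in>D. \<forall>b\<in>D. \<exists>c\<in>D. le a c \<and> le b c)"

definition net_converges :: "'a::ring_1 set set \<Rightarrow> 'd set \<Rightarrow> ('d \<Rightarrow> 'd \<Rightarrow> bool) \<Rightarrow> ('d \<Rightarrow> 'a) \<Rightarrow> 'a \<Rightarrow> bool" where
  "net_converges \<U> D le u w \<longleftrightarrow>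
     (\<forall>U\<in>\<U>. \<exists>d0\<in>D. \<forall>d\<in>D. le d0 d \<longrightarrow> u d - w \<in> U)"

definition limits_of_units_are_units :: "'a::ring_1 set set \<Rightarrow> bool" where
  "limits_of_units_are_units \<U> \<longleftrightarrow>
     (\<forall>(D::'a set set) le u w. directed D le \<and> (\<forall>d\<in>D. is_unit (u d))
        \<and> net_converges \<U> D le u w \<longrightarrow> is_unit w)"

definition aleph0_exchange :: "'a::ring_1 set set \<Rightarrow> 'i itself \<Rightarrow> bool" where
  "aleph0_exchange \<U> _ \<longleftrightarrow>
     (\<forall>(I::'i set) x. countable I \<and> summable_to \<U> I x 1 \<longrightarrow>
        (\<exists>e. (\<forall>i\<in>I. idempotent (e i) \<and> in_left_mult (e i) (x i))
             \<and> (\<forall>i\<in>I. \<forall>j\<in>I. i \<noteq> j \<longrightarrow> orthogonal (e i) (e j))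
             \<and> summable_to \<U> I e 1))"

end

theory Submission
  imports Defs
begin



lemma li_zero: "linear_topology UU \<Longrightarrow> U \<in> UU \<Longrightarrow> 0 \<in> U"
  unfolding linear_topology_def left_ideal_def by blast
lemma li_add: "linear_topology UU \<Longrightarrow> U \<in> UU \<Longrightarrow> a \<in> U \<Longrightarrow> b \<in> U \<Longrightarrow> a + b \<in> U"
  unfolding linear_topology_def left_ideal_def by blast
lemma li_mult: "linear_topology UU \<Longrightarrow> U \<in> UU \<Longrightarrow> a \<in> U \<Longrightarrow> r * a \<in> U"
  unfolding linear_topology_def left_ideal_def by blast
lemma li_neg: "linear_topology UU \<Longrightarrow> U \<in> UU \<Longrightarrow> a \<in> U \<Longrightarrow> - a \<in> U"
  using li_mult[of UU U a "-1"] by simp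
lemma li_diff: "linear_topology UU \<Longrightarrow> U \<in> UU \<Longrightarrow> a \<in> U \<Longrightarrow> b \<in> U \<Longrightarrow> a - b \<in> U"
  using li_add[of UU U a "-b"] li_neg[of UU U b] by simp

lemma unit_mult: "is_unit a \<Longrightarrow> is_unit b \<Longrightarrow> is_unit (a * b)"
  unfolding is_unit_def
proof -
  assume "\<exists>v. a * v = 1 \<and> v * a = 1" "\<exists>v. b * v = 1 \<and> v * b = 1"
  then obtain v u where av: "a * v = 1" and va: "v * a = 1" and bu: "b * u = 1" and ub: "u * b = 1" by blast
  have "(a*b) * (u*v) = a * (b * u) * v" by (simp add: mult.assoc)
  also have "\<dots> = 1" using av bu by simp
  finally have 1: "(a*b) * (u*v) = 1" .
  have "(u*v)*(a*b) = u * (v * a) * b" by (simp add: mult.assoc)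
  also have "\<dots> = 1" using va ub by simp
  finally have 2: "(u*v)*(a*b) = 1" .
  from 1 2 show "\<exists>v. a * b * v = 1 \<and> v * (a * b) = 1" by blast
qed

lemma unit_nil: "(N::'a::ring_1) * N = 0 \<Longrightarrow> is_unit (1 + N)"
  unfolding is_unit_def
  by (rule exI[of _ "1 - N"]) (simp add: algebra_simps)

lemma corner:
  assumes su: "suitable TYPE('a::ring_1)" and ff: "f*f = f" and fz: "f*z = z" and zf: "z*f = (z::'a)"
  shows "\<exists>e s s'. e*e = e \<and> f*e = e \<and> e*f = e \<and> e = s*z \<and> f - e = s'*(f - z)"
proof -
  have "z + (1 - z) = 1" by simp
  then obtain g h where gg: "g*g = g" and gh: "g + h = 1" and "in_left_mult g z" and "in_left_mult h (1 - z)"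
    using su unfolding suitable_def idempotent_def by blast
  then obtain r r' where g: "g = r*z" and h: "h = r'*(1-z)" unfolding in_left_mult_def by blast
  have gf: "g*f = g" using g zf by (simp add: mult.assoc)
  define e where "e = f*g"
  have ee: "e*e = e"
  proof -
    have "e*e = f*(g*f)*g" unfolding e_def by (simp add: mult.assoc)
    also have "\<dots> = f*(g*g)" using gf by (simp add: mult.assoc)
    finally show ?thesis using gg e_def by simp
  qed
  have fe: "f*e = e" unfolding e_def using ff by (simp add: mult.assoc[symmetric])
  have ef: "e*f = e" unfolding e_def using gf by (simp add: mult.assoc)
  have es: "e = (f*r)*z" unfolding e_def g by (simp add: mult.assoc)
  have hh: "h = 1 - g" using gh by (simp add: algebra_simps)
  have feh: "f - e = f*h" unfolding e_def hh by (simp add: algebra_simps)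
  have "f - e = (f - e)*f" using ff ef by (simp add: algebra_simps)
  also have "\<dots> = f*r'*((1-z)*f)" using feh h by (simp add: mult.assoc)
  also have "(1-z)*f = f - z" using zf by (simp add: algebra_simps)
  finally have "f - e = (f*r')*(f - z)" .
  with ee fe ef es show ?thesis by blast
qed


lemma sumE:
  assumes "summable_to UU I z a" "U \<in> UU"
  obtains F' where "finite F'" "F' \<subseteq> I" "\<And>F. finite F \<Longrightarrow> F' \<subseteq> F \<Longrightarrow> F \<subseteq> I \<Longrightarrow> sum z F - a \<in> U"
proof -
  have "\<exists>F'. finite F' \<and> F' \<subseteq> I \<and> (\<forall>F. finite F \<and> F' \<subseteq> F \<and> F \<subseteq> I \<longrightarrow> sum z F - a \<in> U)"
    using assms unfolding summable_to_def by (rule bspec)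
  then obtain F' where "finite F' \<and> F' \<subseteq> I \<and> (\<forall>F. finite F \<and> F' \<subseteq> F \<and> F \<subseteq> I \<longrightarrow> sum z F - a \<in> U)"
    by (rule exE)
  then have h1: "finite F'" and h2: "F' \<subseteq> I" and h3: "\<forall>F. finite F \<and> F' \<subseteq> F \<and> F \<subseteq> I \<longrightarrow> sum z F - a \<in> U"
    by auto
  show ?thesis by (rule that[OF h1 h2]) (use h3 in auto)
qed

lemma sumI:
  assumes "\<And>U. U \<in> UU \<Longrightarrow> \<exists>F'. finite F' \<and> F' \<subseteq> I \<and> (\<forall>F. finite F \<longrightarrow> F' \<subseteq> F \<longrightarrow> F \<subseteq> I \<longrightarrow> sum z F - a \<in> U)"
  shows "summable_to UU I z a"
  unfolding summable_to_def
proof (rule ballI)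
  fix U assume "U \<in> UU"
  from assms[OF this] obtain F' where "finite F'" "F' \<subseteq> I" "\<forall>F. finite F \<longrightarrow> F' \<subseteq> F \<longrightarrow> F \<subseteq> I \<longrightarrow> sum z F - a \<in> U"
    by auto
  then show "\<exists>F'. finite F' \<and> F' \<subseteq> I \<and> (\<forall>F. finite F \<and> F' \<subseteq> F \<and> F \<subseteq> I \<longrightarrow> sum z F - a \<in> U)"
    by (intro exI[of _ F']) auto
qed

lemma sum_left_mult:
  assumes lt: "linear_topology UU" and s: "summable_to UU I z a"
  shows "summable_to UU I (\<lambda>i. r * z i) (r * a)"
proof (rule sumI)
  fix U assume U: "U \<in> UU"
  obtain F' where F': "finite F'" "F' \<subseteq> I" "\<And>F. finite F \<Longrightarrow> F' \<subseteq> F \<Longrightarrow> F \<subseteq> I \<Longrightarrow> sum z F - a \<in> U"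
    using sumE[OF s U] by blast
  have "sum (\<lambda>i. r * z i) F - r * a \<in> U" if "finite F" "F' \<subseteq> F" "F \<subseteq> I" for F
  proof -
    have "sum (\<lambda>i. r * z i) F - r * a = r * (sum z F - a)"
      by (simp add: sum_distrib_left right_diff_distrib)
    then show ?thesis using li_mult[OF lt U F'(3)[OF that], of r] by simp
  qed
  then show "\<exists>F'. finite F' \<and> F' \<subseteq> I \<and> (\<forall>F. finite F \<longrightarrow> F' \<subseteq> F \<longrightarrow> F \<subseteq> I \<longrightarrow> sum (\<lambda>i. r * z i) F - r * a \<in> U)"
    using F'(1,2) by blast
qed

lemma sum_unique:
  assumes lh: "linear_hausdorff UU" and s1: "summable_to UU I z a" and s2: "summable_to UU I z b"
  shows "a = b"
proof -
  have lt: "linear_topology UU" using lh unfolding linear_hausdorff_def by simp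
  have "b - a \<in> U" if U: "U \<in> UU" for U
  proof -
    obtain F1 where F1: "finite F1" "F1 \<subseteq> I" "\<And>F. finite F \<Longrightarrow> F1 \<subseteq> F \<Longrightarrow> F \<subseteq> I \<Longrightarrow> sum z F - a \<in> U"
      using sumE[OF s1 U] by metis
    obtain F2 where F2: "finite F2" "F2 \<subseteq> I" "\<And>F. finite F \<Longrightarrow> F2 \<subseteq> F \<Longrightarrow> F \<subseteq> I \<Longrightarrow> sum z F - b \<in> U"
      using sumE[OF s2 U] by metis
    have "sum z (F1 \<union> F2) - a \<in> U" by (rule F1(3)) (use F1 F2 in auto)
    moreover have "sum z (F1 \<union> F2) - b \<in> U" by (rule F2(3)) (use F1 F2 in auto)
    ultimately have "(sum z (F1 \<union> F2) - a) - (sum z (F1 \<union> F2) - b) \<in> U" by (rule li_diff[OF lt U])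
    then show ?thesis by simp
  qed
  then have "b - a \<in> \<Inter>UU" by (rule InterI)
  then show ?thesis using lh unfolding linear_hausdorff_def by simp
qed

lemma sum_delta:
  assumes lt: "linear_topology UU" and j: "j \<in> I"
  shows "summable_to UU I (\<lambda>k. if k = j then c else 0) c"
proof (rule sumI)
  fix U assume U: "U \<in> UU"
  have "sum (\<lambda>k. if k = j then c else 0) F - c \<in> U" if "finite F" "{j} \<subseteq> F" "F \<subseteq> I" for F
    using that li_zero[OF lt U] by simp
  then show "\<exists>F'. finite F' \<and> F' \<subseteq> I \<and> (\<forall>F. finite F \<longrightarrow> F' \<subseteq> F \<longrightarrow> F \<subseteq> I \<longrightarrow> sum (\<lambda>k. if k = j then c else 0) F - c \<in> U)"
    using j by (intro exI[of _ "{j}"]) simp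
qed


lemma sum_transport1:
  assumes inj: "inj_on h A" and s: "summable_to UU (h ` A) z s"
  shows "summable_to UU A (z \<circ> h) s"
proof (rule sumI)
  fix U assume U: "U \<in> UU"
  obtain F' where F': "finite F'" "F' \<subseteq> h ` A" "\<And>F. finite F \<Longrightarrow> F' \<subseteq> F \<Longrightarrow> F \<subseteq> h ` A \<Longrightarrow> sum z F - s \<in> U"
    using sumE[OF s U] by metis
  define G' where "G' = inv_into A h ` F'"
  have G'1: "finite G'" using F'(1) unfolding G'_def by (rule finite_imageI)
  have G'2: "G' \<subseteq> A" using F'(2) unfolding G'_def by (auto intro: inv_into_into)
  have hG': "h ` G' = F'" unfolding G'_def by (rule image_inv_into_cancel[OF refl F'(2)])
  have "sum (z \<circ> h) G - s \<in> U" if G: "finite G" "G' \<subseteq> G" "G \<subseteq> A" for G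
  proof -
    have sub: "F' \<subseteq> h ` G" using G(2) hG' by blast
    have fin: "finite (h ` G)" using G(1) by (rule finite_imageI)
    have img: "h ` G \<subseteq> h ` A" using G(3) by (rule image_mono)
    have 1: "sum z (h ` G) - s \<in> U" by (rule F'(3)[OF fin sub img])
    have 2: "sum z (h ` G) = sum (z \<circ> h) G"
      by (rule sum.reindex) (rule inj_on_subset[OF inj G(3)])
    show ?thesis using 1 unfolding 2 .
  qed
  then show "\<exists>F'. finite F' \<and> F' \<subseteq> A \<and> (\<forall>F. finite F \<longrightarrow> F' \<subseteq> F \<longrightarrow> F \<subseteq> A \<longrightarrow> sum (z \<circ> h) F - s \<in> U)"
    using G'1 G'2 by (intro exI[of _ G']) simp
qed

lemma sum_transport2:
  assumes inj: "inj_on h A" and s: "summable_to UU A (z \<circ> h) s"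
  shows "summable_to UU (h ` A) z s"
proof (rule sumI)
  fix U assume U: "U \<in> UU"
  obtain G' where G': "finite G'" "G' \<subseteq> A" "\<And>F. finite F \<Longrightarrow> G' \<subseteq> F \<Longrightarrow> F \<subseteq> A \<Longrightarrow> sum (z \<circ> h) F - s \<in> U"
    using sumE[OF s U] by metis
  have "sum z F - s \<in> U" if F: "finite F" "h ` G' \<subseteq> F" "F \<subseteq> h ` A" for F
  proof -
    define G where "G = inv_into A h ` F"
    have hG: "h ` G = F" unfolding G_def by (rule image_inv_into_cancel[OF refl F(3)])
    have GA: "G \<subseteq> A" unfolding G_def using F(3) by (auto intro: inv_into_into)
    have fin: "finite G" unfolding G_def using F(1) by (rule finite_imageI)
    have "inv_into A h ` h ` G' \<subseteq> G" unfolding G_def using F(2) by (rule image_mono)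
    then have sub: "G' \<subseteq> G" using inv_into_image_cancel[OF inj G'(2)] by simp
    have 1: "sum (z \<circ> h) G - s \<in> U" by (rule G'(3)[OF fin sub GA])
    have 2: "sum z (h ` G) = sum (z \<circ> h) G"
      by (rule sum.reindex) (rule inj_on_subset[OF inj GA])
    show ?thesis using 1 unfolding 2[symmetric] hG .
  qed
  then show "\<exists>F'. finite F' \<and> F' \<subseteq> h ` A \<and> (\<forall>F. finite F \<longrightarrow> F' \<subseteq> F \<longrightarrow> F \<subseteq> h ` A \<longrightarrow> sum z F - s \<in> U)"
    using G'(1,2) by (intro exI[of _ "h ` G'"]) auto
qed

lemma sum_cong_on:
  assumes "\<And>i. i \<in> A \<Longrightarrow> z i = z' i" and "summable_to UU A z s"
  shows "summable_to UU A z' s"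
proof (rule sumI)
  fix U assume U: "U \<in> UU"
  obtain F' where F': "finite F'" "F' \<subseteq> A" "\<And>F. finite F \<Longrightarrow> F' \<subseteq> F \<Longrightarrow> F \<subseteq> A \<Longrightarrow> sum z F - s \<in> U"
    using sumE[OF assms(2) U] by metis
  have "sum z' F - s \<in> U" if "finite F" "F' \<subseteq> F" "F \<subseteq> A" for F
  proof -
    have "sum z F = sum z' F" using assms(1) that(3) by (intro sum.cong) auto
    then show ?thesis using F'(3)[OF that] by simp
  qed
  then show "\<exists>F'. finite F' \<and> F' \<subseteq> A \<and> (\<forall>F. finite F \<longrightarrow> F' \<subseteq> F \<longrightarrow> F \<subseteq> A \<longrightarrow> sum z' F - s \<in> U)"
    using F'(1,2) by (intro exI[of _ F']) simp
qed

lemma sum_extend1: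
  assumes AB: "A \<subseteq> B" and z0: "\<And>i. i \<in> B - A \<Longrightarrow> z i = 0" and s: "summable_to UU A z s"
  shows "summable_to UU B z s"
proof (rule sumI)
  fix U assume U: "U \<in> UU"
  obtain F' where F': "finite F'" "F' \<subseteq> A" "\<And>F. finite F \<Longrightarrow> F' \<subseteq> F \<Longrightarrow> F \<subseteq> A \<Longrightarrow> sum z F - s \<in> U"
    using sumE[OF s U] by metis
  have "sum z F - s \<in> U" if F: "finite F" "F' \<subseteq> F" "F \<subseteq> B" for F
  proof -
    have "sum z F = sum z (F \<inter> A)"
      using F z0 by (intro sum.mono_neutral_right) auto
    moreover have "sum z (F \<inter> A) - s \<in> U" using F F'(2) by (intro F'(3)) auto
    ultimately show ?thesis by simp
  qed
  then show "\<exists>F'. finite F' \<and> F' \<subseteq> B \<and> (\<forall>F. finite F \<longrightarrow> F' \<subseteq> F \<longrightarrow> F \<subseteq> B \<longrightarrow> sum z F - s \<in> U)"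
    using F'(1,2) AB by (intro exI[of _ F']) auto
qed

lemma sum_extend2:
  assumes AB: "A \<subseteq> B" and z0: "\<And>i. i \<in> B - A \<Longrightarrow> z i = 0" and s: "summable_to UU B z s"
  shows "summable_to UU A z s"
proof (rule sumI)
  fix U assume U: "U \<in> UU"
  obtain F' where F': "finite F'" "F' \<subseteq> B" "\<And>F. finite F \<Longrightarrow> F' \<subseteq> F \<Longrightarrow> F \<subseteq> B \<Longrightarrow> sum z F - s \<in> U"
    using sumE[OF s U] by metis
  have "sum z F - s \<in> U" if F: "finite F" "F' \<inter> A \<subseteq> F" "F \<subseteq> A" for F
  proof -
    have "sum z (F \<union> F') = sum z F"
    proof (rule sum.mono_neutral_right)
      show "finite (F \<union> F')" using F(1) F'(1) by simp
      show "F \<subseteq> F \<union> F'" by blast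
      show "\<forall>i\<in>F \<union> F' - F. z i = 0"
      proof
        fix i assume "i \<in> F \<union> F' - F"
        then have "i \<in> B - A" using F(2) F'(2) by blast
        then show "z i = 0" by (rule z0)
      qed
    qed
    moreover have "sum z (F \<union> F') - s \<in> U" using F F'(1,2) AB by (intro F'(3)) auto
    ultimately show ?thesis by simp
  qed
  then show "\<exists>F'. finite F' \<and> F' \<subseteq> A \<and> (\<forall>F. finite F \<longrightarrow> F' \<subseteq> F \<longrightarrow> F \<subseteq> A \<longrightarrow> sum z F - s \<in> U)"
    using F'(1) by (intro exI[of _ "F' \<inter> A"]) auto
qed


lemma filter_base:
  assumes lt: "linear_topology UU"
  shows "finite V \<Longrightarrow> V \<noteq> {} \<Longrightarrow> V \<subseteq> UU \<Longrightarrow> \<exists>W\<in>UU. W \<subseteq> \<Inter>V"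
proof (induction V rule: finite_ne_induct)
  case (singleton x)
  then show ?case by auto
next
  case (insert x F)
  then obtain W where W: "W \<in> UU" "W \<subseteq> \<Inter>F" by auto
  have "x \<in> UU" using insert.prems by auto
  then obtain W' where "W' \<in> UU" "W' \<subseteq> x \<inter> W" using lt W(1) unfolding linear_topology_def by blast
  then show ?case using W by auto
qed

lemma nice_nat:
  fixes UU :: "'a::ring_1 set set" and y :: "nat \<Rightarrow> 'a"
  assumes ni: "nice UU" and s: "summable_to UU (UNIV::nat set) y s"
  shows "summable_fam UU UNIV (\<lambda>n. c n * y n)"
proof (cases "finite (UNIV::'a set)")
  case True
  have lh: "linear_hausdorff UU" using ni unfolding nice_def by simp
  then have lt: "linear_topology UU" and I0: "\<Inter>UU = {0}" unfolding linear_hausdorff_def by simp_all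
  have "finite (Pow (UNIV::'a set))" using True by (rule finite_Pow_iff[THEN iffD2])
  then have fU: "finite UU" by (rule finite_subset[rotated]) simp
  have ne: "UU \<noteq> {}" using lt unfolding linear_topology_def by simp
  obtain W where W: "W \<in> UU" "W \<subseteq> \<Inter>UU" using filter_base[OF lt fU ne] by blast
  obtain F' where F': "finite F'" "\<And>F. finite F \<Longrightarrow> F' \<subseteq> F \<Longrightarrow> sum y F - s \<in> W"
    using sumE[OF s W(1)] by (metis subset_UNIV)
  have eq: "sum y F = s" if "finite F" "F' \<subseteq> F" for F
    using F'(2)[OF that] W(2) I0 by auto
  have y0: "y n = 0" if "n \<notin> F'" for n
  proof -
    have "sum y (insert n F') = s" by (rule eq) (use F'(1) in auto)
    moreover have "sum y F' = s" by (rule eq) (use F'(1) in auto)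
    moreover have "sum y (insert n F') = y n + sum y F'" using F'(1) that by simp
    ultimately show ?thesis by simp
  qed
  have "summable_to UU UNIV (\<lambda>n. c n * y n) (sum (\<lambda>n. c n * y n) F')"
  proof (rule sumI)
    fix U assume U: "U \<in> UU"
    have "sum (\<lambda>n. c n * y n) F - sum (\<lambda>n. c n * y n) F' \<in> U" if "finite F" "F' \<subseteq> F" for F
    proof -
      have "sum (\<lambda>n. c n * y n) F = sum (\<lambda>n. c n * y n) F'"
        by (rule sum.mono_neutral_right) (use that y0 in auto)
      then show ?thesis using li_zero[OF lt U] by simp
    qed
    then show "\<exists>G. finite G \<and> G \<subseteq> UNIV \<and> (\<forall>F. finite F \<longrightarrow> G \<subseteq> F \<longrightarrow> F \<subseteq> UNIV \<longrightarrow> sum (\<lambda>n. c n * y n) F - sum (\<lambda>n. c n * y n) F' \<in> U)"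
      using F'(1) by (intro exI[of _ F']) simp
  qed
  then show ?thesis unfolding summable_fam_def by blast
next
  case False
  obtain f :: "nat \<Rightarrow> 'a" where f: "inj f" using infinite_countable_subset[OF False] by blast
  define h :: "nat \<Rightarrow> 'a set set" where "h = (\<lambda>n. {{f n}})"
  have ih: "inj h" using f unfolding h_def inj_def by simp
  have ihA: "inj_on h UNIV" using ih by simp
  define y' where "y' = y \<circ> inv h"
  have "y' \<circ> h = y" unfolding y'_def using ih by (simp add: fun_eq_iff)
  then have "summable_to UU UNIV (y' \<circ> h) s" using s by simp
  then have "summable_to UU (h ` UNIV) y' s" by (rule sum_transport2[OF ihA])
  then have "summable_fam UU (range h) y'" unfolding summable_fam_def by blast
  moreover have nn: "\<forall>(I::'a set set set) x r. summable_fam UU I x \<longrightarrow> summable_fam UU I (\<lambda>i. r i * x i)"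
    using ni unfolding nice_def by simp
  ultimately have "summable_fam UU (range h) (\<lambda>i. (c \<circ> inv h) i * y' i)"
    using nn[rule_format, of "range h" y' "c \<circ> inv h"] by simp
  then obtain s' where "summable_to UU (h ` UNIV) (\<lambda>i. (c \<circ> inv h) i * y' i) s'"
    unfolding summable_fam_def by blast
  then have "summable_to UU UNIV ((\<lambda>i. (c \<circ> inv h) i * y' i) \<circ> h) s'"
    by (rule sum_transport1[OF ihA])
  moreover have "((\<lambda>i. (c \<circ> inv h) i * y' i) \<circ> h) = (\<lambda>n. c n * y n)"
    unfolding y'_def using ih by (simp add: fun_eq_iff)
  ultimately show ?thesis unfolding summable_fam_def by auto
qed


lemma step:
  fixes f \<beta> q x t' :: "'a::ring_1"
  assumes su: "suitable TYPE('a)" and ff: "f*f = f" and fb: "f*\<beta> = \<beta>" and bf: "\<beta>*f = f"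
    and bq: "\<beta> = q*(x + t')"
  shows "\<exists>e \<alpha> f' \<beta>'. e*e = e \<and> f*e = e \<and> e*f = e \<and> f' = f - e \<and> f'*f' = f' \<and> e*\<alpha> = \<alpha> \<and> \<alpha>*f = e
     \<and> (\<exists>a. \<alpha> = a*x) \<and> f'*\<beta>' = \<beta>' \<and> \<beta>'*f' = f' \<and> \<beta>'*f = f' \<and> (\<exists>b. \<beta>' = b*t')"
proof -
  define z where "z = f*q*x*f"
  have fz: "f*z = z" unfolding z_def using ff by (simp add: mult.assoc[symmetric])
  have zf: "z*f = z" unfolding z_def using ff by (simp add: mult.assoc)
  have "f = (f*\<beta>)*f" using fb bf by simp
  also have "\<dots> = z + f*q*t'*f" unfolding z_def bq by (simp add: algebra_simps)
  finally have fzt: "f - z = f*q*t'*f" by (simp add: algebra_simps)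
  obtain e s s' where ee: "e*e = e" and fe: "f*e = e" and ef: "e*f = e" and es: "e = s*z" and fes: "f - e = s'*(f - z)"
    using corner[OF su ff fz zf] by blast
  define \<alpha> where "\<alpha> = e*s*f*q*x"
  have ea: "e*\<alpha> = \<alpha>" unfolding \<alpha>_def using ee by (simp add: mult.assoc[symmetric])
  have "\<alpha>*f = e*(s*z)" unfolding \<alpha>_def z_def by (simp add: mult.assoc)
  then have af: "\<alpha>*f = e" using es ee by simp
  have ax: "\<exists>a. \<alpha> = a*x" unfolding \<alpha>_def by (rule exI[of _ "e*s*f*q"]) simp
  define f' where "f' = f - e"
  have f'f': "f'*f' = f'" unfolding f'_def using ff fe ef ee by (simp add: algebra_simps)
  define \<beta>' where "\<beta>' = f'*s'*f*q*t'"
  have "\<beta>'*f = f'*(s'*(f*q*t'*f))" unfolding \<beta>'_def by (simp add: mult.assoc)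
  also have "\<dots> = f'*f'" unfolding fzt[symmetric] fes[symmetric] f'_def ..
  finally have b'f: "\<beta>'*f = f'" using f'f' by simp
  have f'b': "f'*\<beta>' = \<beta>'" unfolding \<beta>'_def using f'f' by (simp add: mult.assoc[symmetric])
  have "\<beta>'*e = (\<beta>'*f)*e" using fe by (simp add: mult.assoc)
  also have "\<dots> = 0" unfolding b'f f'_def using ee fe by (simp add: algebra_simps)
  finally have b'e: "\<beta>'*e = 0" .
  have b'f': "\<beta>'*f' = f'" unfolding f'_def using b'f b'e f'_def by (simp add: algebra_simps)
  have bt: "\<exists>b. \<beta>' = b*t'" unfolding \<beta>'_def by (rule exI[of _ "f'*s'*f*q"]) simp
  show ?thesis
    apply (rule exI[of _ e], rule exI[of _ \<alpha>], rule exI[of _ f'], rule exI[of _ \<beta>'])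
    using ee fe ef f'_def f'f' ea af ax f'b' b'f' b'f bt by blast
qed


lemma nat_exchange:
  fixes UU :: "'a::ring_1 set set" and x :: "nat \<Rightarrow> 'a"
  assumes su: "suitable TYPE('a)" and ni: "nice UU" and lu: "limits_of_units_are_units UU"
    and sx: "summable_to UU UNIV x 1"
  shows "\<exists>e. (\<forall>i. e i * e i = e i \<and> (\<exists>r. e i = r * x i)) \<and> (\<forall>i j. i \<noteq> j \<longrightarrow> e i * e j = 0)
     \<and> summable_to UU UNIV e 1"
proof -
  have lh: "linear_hausdorff UU" using ni unfolding nice_def by simp
  then have lt: "linear_topology UU" unfolding linear_hausdorff_def by simp
  define t where "t n = 1 - sum x {..<n}" for n
  have tS: "t n = x n + t (Suc n)" for n unfolding t_def by (simp add: algebra_simps)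
  define Q where "Q = (\<lambda>n f (\<beta>::'a) e \<alpha> f' \<beta>'. e*e = e \<and> f*e = e \<and> e*f = e \<and> f' = f - e \<and> f'*f' = f' \<and> e*\<alpha> = \<alpha> \<and> \<alpha>*f = e
     \<and> (\<exists>a. \<alpha> = a*x n) \<and> f'*\<beta>' = \<beta>' \<and> \<beta>'*f' = f' \<and> \<beta>'*f = f' \<and> (\<exists>b. \<beta>' = b*t (Suc n)))"
  define C where "C = (\<lambda>n f \<beta>. f*f = f \<and> f*\<beta> = \<beta> \<and> \<beta>*f = f \<and> (\<exists>q. \<beta> = q*t n))"
  have ex: "\<forall>p. \<exists>r. C (fst p) (fst (snd p)) (snd (snd p)) \<longrightarrow>
     Q (fst p) (fst (snd p)) (snd (snd p)) (fst r) (fst (snd r)) (fst (snd (snd r))) (snd (snd (snd r)))"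
  proof
    fix p :: "nat \<times> 'a \<times> 'a"
    obtain n f \<beta> where p: "p = (n, f, \<beta>)" by (cases p) auto
    show "\<exists>r. C (fst p) (fst (snd p)) (snd (snd p)) \<longrightarrow>
     Q (fst p) (fst (snd p)) (snd (snd p)) (fst r) (fst (snd r)) (fst (snd (snd r))) (snd (snd (snd r)))"
    proof (cases "C n f \<beta>")
      case True
      then have ff: "f*f = f" and fb: "f*\<beta> = \<beta>" and bf: "\<beta>*f = f" and "\<exists>q. \<beta> = q*t n"
        unfolding C_def by auto
      then obtain q where "\<beta> = q*t n" by blast
      then have bq: "\<beta> = q*(x n + t (Suc n))" by (simp only: tS[of n])
      have "\<exists>e \<alpha> f' \<beta>'. Q n f \<beta> e \<alpha> f' \<beta>'"
        using step[OF su ff fb bf bq] unfolding Q_def .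
      then obtain e \<alpha> f' \<beta>' where "Q n f \<beta> e \<alpha> f' \<beta>'" by blast
      then show ?thesis unfolding p by (intro exI[of _ "(e, \<alpha>, f', \<beta>')"]) simp
    next
      case False
      then show ?thesis unfolding p by simp
    qed
  qed
  obtain nx where nx: "\<forall>p. C (fst p) (fst (snd p)) (snd (snd p)) \<longrightarrow>
     Q (fst p) (fst (snd p)) (snd (snd p)) (fst (nx p)) (fst (snd (nx p))) (fst (snd (snd (nx p)))) (snd (snd (snd (nx p))))"
    using choice[OF ex] by (elim exE) (rule that, assumption)
  define st where "st = rec_nat ((1::'a), (1::'a)) (\<lambda>n p. (fst (snd (snd (nx (n, fst p, snd p)))), snd (snd (snd (nx (n, fst p, snd p))))))"
  define F where "F n = fst (st n)" for n
  define B where "B n = snd (st n)" for n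
  define R where "R n = nx (n, F n, B n)" for n
  define E where "E n = fst (R n)" for n
  define A where "A n = fst (snd (R n))" for n
  have F0: "F 0 = 1" and B0: "B 0 = 1" unfolding F_def B_def st_def by simp_all
  have FS: "F (Suc n) = fst (snd (snd (R n)))" for n unfolding F_def R_def st_def B_def by simp
  have BS: "B (Suc n) = snd (snd (snd (R n)))" for n unfolding B_def R_def st_def F_def by simp
  have CQ: "C n (F n) (B n) \<Longrightarrow> Q n (F n) (B n) (E n) (A n) (F (Suc n)) (B (Suc n))" for n
    using nx[rule_format, of "(n, F n, B n)"] unfolding FS BS E_def A_def R_def by simp
  have CC: "C n (F n) (B n)" for n
  proof (induction n)
    case 0
    show ?case unfolding C_def F0 B0 t_def by simp
  next
    case (Suc n)
    from CQ[OF Suc] show ?case unfolding Q_def C_def by (elim conjE) (intro conjI; assumption)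
  qed
  have QQ: "Q n (F n) (B n) (E n) (A n) (F (Suc n)) (B (Suc n))" for n using CQ[OF CC] .
  have FF: "F n * F n = F n" for n using CC[of n] unfolding C_def by (elim conjE) assumption
  have FB: "F n * B n = B n" for n using CC[of n] unfolding C_def by (elim conjE) assumption
  have BF: "B n * F n = F n" for n using CC[of n] unfolding C_def by (elim conjE) assumption
  have Bt: "\<exists>q. B n = q * t n" for n using CC[of n] unfolding C_def by (elim conjE) assumption
  have EE: "E n * E n = E n" for n using QQ[of n] unfolding Q_def by (elim conjE) assumption
  have FE: "F n * E n = E n" for n using QQ[of n] unfolding Q_def by (elim conjE) assumption
  have EF: "E n * F n = E n" for n using QQ[of n] unfolding Q_def by (elim conjE) assumption
  have FSuc: "F (Suc n) = F n - E n" for n using QQ[of n] unfolding Q_def by (elim conjE) assumption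
  have EA: "E n * A n = A n" for n using QQ[of n] unfolding Q_def by (elim conjE) assumption
  have AF: "A n * F n = E n" for n using QQ[of n] unfolding Q_def by (elim conjE) assumption
  have Ax: "\<exists>a. A n = a * x n" for n using QQ[of n] unfolding Q_def by (elim conjE) assumption
  have BSF: "B (Suc n) * F n = F (Suc n)" for n using QQ[of n] unfolding Q_def by (elim conjE) assumption
  have FBS: "F (Suc n) * B (Suc n) = B (Suc n)" for n using QQ[of n] unfolding Q_def by (elim conjE) assumption
  have FFS: "F n * F (Suc n) = F (Suc n)" for n
    unfolding FSuc using FF FE by (simp add: algebra_simps)
  have FSF: "F (Suc n) * F n = F (Suc n)" for n
    unfolding FSuc using FF EF by (simp add: algebra_simps)
  have chain: "F m * F (m + k) = F (m + k) \<and> F (m + k) * F m = F (m + k)" for m k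
  proof (induction k)
    case 0
    then show ?case using FF by simp
  next
    case (Suc k)
    have 1: "F m * F (m + Suc k) = (F m * F (m + k)) * F (Suc (m + k))"
      using FFS[of "m+k"] by (simp add: mult.assoc)
    have 2: "F (m + Suc k) * F m = F (Suc (m + k)) * (F (m + k) * F m)"
    proof -
      have "F (Suc (m+k)) * F m = (F (Suc (m+k)) * F (m+k)) * F m" using FSF[of "m+k"] by simp
      then show ?thesis by (simp add: mult.assoc)
    qed
    show ?case using 1 2 Suc FFS[of "m+k"] FSF[of "m+k"] by simp
  qed
  have chain1: "m \<le> n \<Longrightarrow> F m * F n = F n" for m n
    using chain[of m "n - m"] by simp
  have chain2: "m \<le> n \<Longrightarrow> F n * F m = F n" for m n
    using chain[of m "n - m"] by simp
  have EFSuc: "E i * F (Suc i) = 0" for i unfolding FSuc using EE EF by (simp add: algebra_simps)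
  have FSucE: "F (Suc i) * E i = 0" for i unfolding FSuc using EE FE by (simp add: algebra_simps)
  have EFj: "i < j \<Longrightarrow> E i * F j = 0" for i j
  proof -
    assume "i < j"
    then have "F (Suc i) * F j = F j" by (intro chain1) simp
    then have "E i * F j = (E i * F (Suc i)) * F j" by (simp add: mult.assoc)
    then show ?thesis using EFSuc by simp
  qed
  have FjE: "i < j \<Longrightarrow> F j * E i = 0" for i j
  proof -
    assume "i < j"
    then have "F j * F (Suc i) = F j" by (intro chain2) simp
    then have "F j * E i = F j * (F (Suc i) * E i)" by (simp add: mult.assoc[symmetric])
    then show ?thesis using FSucE by simp
  qed
  have orth: "i \<noteq> j \<Longrightarrow> E i * E j = 0" for i j
  proof (cases "i < j")
    case True
    have "E i * E j = (E i * F j) * E j" using FE[of j] by (simp add: mult.assoc)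
    then show ?thesis using EFj[OF True] by simp
  next
    case False
    assume "i \<noteq> j"
    then have ji: "j < i" using False by simp
    have "E i * E j = E i * (F i * E j)" using EF[of i] by (simp add: mult.assoc[symmetric])
    then show ?thesis using FjE[OF ji] by simp
  qed
  have EAd: "E i * A j = (if j = i then A i else 0)" for i j
  proof (cases "i = j")
    case True
    then show ?thesis using EA by simp
  next
    case False
    have "E i * A j = (E i * E j) * A j" using EA[of j] by (simp add: mult.assoc)
    then show ?thesis using orth[OF False] False by simp
  qed
  have AFn: "j < n \<Longrightarrow> A j * F n = 0" for j n
  proof -
    assume jn: "j < n"
    have "A j * F n = (A j * F j) * F n" using chain1[of j n] jn by (simp add: mult.assoc)
    then show ?thesis using AF EFj[OF jn] by simp
  qed
  define W where "W n = sum A {..<n} + B n" for n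
  have WF: "W n * F n = F n" for n
  proof -
    have "sum A {..<n} * F n = (\<Sum>j<n. A j * F n)" by (rule sum_distrib_right)
    also have "\<dots> = 0" using AFn by simp
    finally show ?thesis unfolding W_def using BF by (simp add: distrib_right)
  qed
  have Wunit: "is_unit (W n)" for n
  proof (induction n)
    case 0
    show ?case unfolding W_def B0 is_unit_def by simp
  next
    case (Suc n)
    define D where "D = A n + B (Suc n) - B n"
    have WS: "W (Suc n) = W n + D" unfolding W_def D_def by (simp add: algebra_simps)
    have DF: "D * F n = 0" unfolding D_def using AF BSF BF FSuc by (simp add: algebra_simps)
    have FA: "F n * A n = A n"
    proof -
      have "F n * A n = (F n * E n) * A n" using EA[of n] by (simp add: mult.assoc)
      then show ?thesis using FE EA by simp
    qed
    have FBS': "F n * B (Suc n) = B (Suc n)"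
    proof -
      have "F n * B (Suc n) = (F n * F (Suc n)) * B (Suc n)" using FBS[of n] by (simp add: mult.assoc)
      then show ?thesis using FFS FBS by simp
    qed
    have FD: "F n * D = D" unfolding D_def using FA FBS' FB by (simp add: algebra_simps)
    obtain V where WV: "W n * V = 1" and VW: "V * W n = 1" using Suc unfolding is_unit_def by blast
    have VF: "V * F n = F n"
    proof -
      have "V * F n = (V * W n) * F n" using WF[of n] by (simp add: mult.assoc)
      then show ?thesis using VW by simp
    qed
    have "D * V * D = D * (V * F n) * D" using FD by (simp add: mult.assoc)
    also have "\<dots> = (D * F n) * D" using VF by (simp add: mult.assoc)
    finally have DVD: "D * V * D = 0" using DF by simp
    have "(V * D) * (V * D) = V * (D * V * D)" by (simp add: mult.assoc)
    then have "(V * D) * (V * D) = 0" using DVD by simp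
    then have u: "is_unit (1 + V * D)" by (rule unit_nil)
    have "W n * (1 + V * D) = W n + (W n * V) * D" by (simp add: algebra_simps)
    then have "W n * (1 + V * D) = W (Suc n)" using WV WS by simp
    then show ?case using unit_mult[OF Suc u] by simp
  qed
  obtain c where c: "\<And>n. A n = c n * x n" using Ax by metis
  have Aeq: "A = (\<lambda>n. c n * x n)" using c by (simp add: fun_eq_iff)
  obtain w where sA: "summable_to UU UNIV A w"
    using nice_nat[OF ni sx, of c] unfolding summable_fam_def Aeq by blast
  have approx: "\<exists>n. W n - w \<in> U" if U: "U \<in> UU" for U
  proof -
    obtain F1 where F1: "finite F1" "\<And>F. finite F \<Longrightarrow> F1 \<subseteq> F \<Longrightarrow> sum A F - w \<in> U"
      using sumE[OF sA U] by (metis subset_UNIV)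
    obtain F2 where F2: "finite F2" "\<And>F. finite F \<Longrightarrow> F2 \<subseteq> F \<Longrightarrow> sum x F - 1 \<in> U"
      using sumE[OF sx U] by (metis subset_UNIV)
    have "finite (F1 \<union> F2)" using F1(1) F2(1) by simp
    then obtain n where n: "F1 \<union> F2 \<subseteq> {..<n}" using finite_nat_bounded by blast
    have 1: "sum A {..<n} - w \<in> U" using n by (intro F1(2)) auto
    have 2: "sum x {..<n} - 1 \<in> U" using n by (intro F2(2)) auto
    have "t n = - (sum x {..<n} - 1)" unfolding t_def by simp
    then have tU: "t n \<in> U" using li_neg[OF lt U 2] by simp
    obtain q where "B n = q * t n" using Bt by blast
    then have BU: "B n \<in> U" using li_mult[OF lt U tU] by simp
    have eqW: "W n - w = (sum A {..<n} - w) + B n" unfolding W_def by (simp add: algebra_simps)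
    have "W n - w \<in> U" unfolding eqW by (rule li_add[OF lt U 1 BU])
    then show ?thesis by blast
  qed
  have wunit: "is_unit w"
  proof -
    define le where "le = (\<lambda>U V. V \<subseteq> (U::'a set))"
    define u where "u = (\<lambda>U. W (SOME n. W n - w \<in> U))"
    have ne: "UU \<noteq> {}" using lt unfolding linear_topology_def by simp
    have cap: "\<forall>a\<in>UU. \<forall>b\<in>UU. \<exists>c\<in>UU. c \<subseteq> a \<and> c \<subseteq> b"
      using lt unfolding linear_topology_def by (meson le_inf_iff)
    have dir: "directed UU le"
      unfolding directed_def le_def using ne cap by auto
    have uu: "\<forall>d\<in>UU. is_unit (u d)" unfolding u_def using Wunit by blast
    have conv: "net_converges UU UU le u w"
      unfolding net_converges_def
    proof (intro ballI)
      fix U assume U: "U \<in> UU"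
      have "u d - w \<in> U" if "d \<in> UU" "le U d" for d
      proof -
        have "u d - w \<in> d" unfolding u_def by (rule someI_ex) (rule approx[OF that(1)])
        then show ?thesis using that(2) unfolding le_def by auto
      qed
      then show "\<exists>d0\<in>UU. \<forall>d\<in>UU. le d0 d \<longrightarrow> u d - w \<in> U" using U by blast
    qed
    have "\<forall>(D::'a set set) le u w. directed D le \<and> (\<forall>d\<in>D. is_unit (u d)) \<and> net_converges UU D le u w \<longrightarrow> is_unit w"
      using lu unfolding limits_of_units_are_units_def by simp
    then show ?thesis using dir uu conv by blast
  qed
  obtain v where wv: "w * v = 1" and vw: "v * w = 1" using wunit unfolding is_unit_def by blast
  have Ew: "E j * w = A j" for j
  proof -
    have s1: "summable_to UU UNIV (\<lambda>k. E j * A k) (E j * w)" by (rule sum_left_mult[OF lt sA])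
    have "(\<lambda>k. E j * A k) = (\<lambda>k. if k = j then A j else 0)" using EAd by (simp add: fun_eq_iff)
    moreover have "summable_to UU UNIV (\<lambda>k. if k = j then A j else 0) (A j)" by (rule sum_delta[OF lt]) simp
    ultimately have s2: "summable_to UU UNIV (\<lambda>k. E j * A k) (A j)" by simp
    show ?thesis by (rule sum_unique[OF lh s1 s2])
  qed
  have AvA: "A i * v * A j = (if i = j then A j else 0)" for i j
  proof -
    have "A i * v * A j = (E i * w) * v * A j" using Ew[of i] by simp
    also have "\<dots> = E i * (w * v) * A j" by (simp add: mult.assoc)
    also have "\<dots> = E i * A j" using wv by simp
    finally show ?thesis using EAd[of i j] by auto
  qed
  define e where "e n = v * A n" for n
  have e1: "e i * e i = e i" for i
  proof -
    have "e i * e i = v * (A i * v * A i)" unfolding e_def by (simp add: mult.assoc)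
    then show ?thesis using AvA[of i i] unfolding e_def by simp
  qed
  have e2: "\<exists>r. e i = r * x i" for i unfolding e_def c by (rule exI[of _ "v * c i"]) (simp add: mult.assoc)
  have e3: "e i * e j = 0" if "i \<noteq> j" for i j
  proof -
    have "e i * e j = v * (A i * v * A j)" unfolding e_def by (simp add: mult.assoc)
    then show ?thesis using AvA[of i j] that by simp
  qed
  have e4: "summable_to UU UNIV e 1"
    using sum_left_mult[OF lt sA, of v] vw unfolding e_def by simp
  show ?thesis using e1 e2 e3 e4 by blast
qed


theorem theorem1:
  fixes \<U> :: "'a::ring_1 set set"
  assumes "suitable TYPE('a)"
    and "nice \<U>"
    and "limits_of_units_are_units \<U>"
  shows "aleph0_exchange \<U> TYPE('i)"
  unfolding aleph0_exchange_def
proof (intro allI impI)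
  fix I :: "'i set" and x :: "'i \<Rightarrow> 'a"
  assume H: "countable I \<and> summable_to \<U> I x 1"
  then have cI: "countable I" and sx: "summable_to \<U> I x 1" by simp_all
  define g where "g = to_nat_on I"
  have ig: "inj_on g I" unfolding g_def using cI by (rule inj_on_to_nat_on)
  define y where "y n = (if n \<in> g ` I then x (inv_into I g n) else 0)" for n
  have yg: "(y \<circ> g) i = x i" if "i \<in> I" for i
    unfolding y_def using that inv_into_f_f[OF ig that] by simp
  have "summable_to \<U> I (y \<circ> g) 1" by (rule sum_cong_on[OF _ sx]) (metis yg)
  then have "summable_to \<U> (g ` I) y 1" by (rule sum_transport2[OF ig])
  then have sy: "summable_to \<U> UNIV y 1"
    by (rule sum_extend1[rotated 2]) (auto simp: y_def)
  obtain e' where e'1: "\<And>i. e' i * e' i = e' i" and e'2: "\<And>i. \<exists>r. e' i = r * y i"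
    and e'3: "\<And>i j. i \<noteq> j \<Longrightarrow> e' i * e' j = 0" and e'4: "summable_to \<U> UNIV e' 1"
    using nat_exchange[OF assms sy] by blast
  have e'0: "e' n = 0" if "n \<notin> g ` I" for n
  proof -
    obtain r where "e' n = r * y n" using e'2 by blast
    then show ?thesis using that unfolding y_def by simp
  qed
  have "summable_to \<U> (g ` I) e' 1" by (rule sum_extend2[OF _ _ e'4]) (auto simp: e'0)
  then have s: "summable_to \<U> I (e' \<circ> g) 1" by (rule sum_transport1[OF ig])
  have "(\<forall>i\<in>I. idempotent ((e' \<circ> g) i) \<and> in_left_mult ((e' \<circ> g) i) (x i))"
  proof
    fix i assume i: "i \<in> I"
    obtain r where "e' (g i) = r * y (g i)" using e'2 by blast
    then have ex: "e' (g i) = r * x i" using yg[OF i] by simp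
    have "idempotent ((e' \<circ> g) i)" unfolding idempotent_def o_def by (rule e'1)
    moreover have "in_left_mult ((e' \<circ> g) i) (x i)" unfolding in_left_mult_def o_def using ex by blast
    ultimately show "idempotent ((e' \<circ> g) i) \<and> in_left_mult ((e' \<circ> g) i) (x i)" by simp
  qed
  moreover have "\<forall>i\<in>I. \<forall>j\<in>I. i \<noteq> j \<longrightarrow> orthogonal ((e' \<circ> g) i) ((e' \<circ> g) j)"
  proof (intro ballI impI)
    fix i j assume "i \<in> I" "j \<in> I" "i \<noteq> j"
    then have "g i \<noteq> g j" using ig unfolding inj_on_def by blast
    then show "orthogonal ((e' \<circ> g) i) ((e' \<circ> g) j)" unfolding orthogonal_def using e'3 by auto
  qed
  ultimately show "\<exists>e. (\<forall>i\<in>I. idempotent (e i) \<and> in_left_mult (e i) (x i)) \<and>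
            (\<forall>i\<in>I. \<forall>j\<in>I. i \<noteq> j \<longrightarrow> orthogonal (e i) (e j)) \<and> summable_to \<U> I e 1"
    using s by blast
qed

end
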